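(* Let $H=\sum_{i=1}^Nc_iP_i$ be a Pauli Hamiltonian, $|\psi\rangle$ a state, $\mathcal{R}=(G^{[1]},\dots,G^{[m]})$ a repacked grouping (of some grouping of $H$), and $\mathcal{R}'=(G'^{[1]},\dots,G'^{[m]})$ a refinement of $\mathcal{R}$ such that for some $1\le\ell\le m$: $G'^{[j]}=G^{[j]}$ for all $j\ne\ell$, and $G'^{[\ell]}\setminus G^{[\ell]}=\{P_s\}$ for some $P_s\in\mathrm{supp}(H)$. Fix positive integer shot counts $M_1,\dots,M_m$ used for both $\mathcal{R}$ and $\mathcal{R}'$. Define, for $t,t'\in\{1,\dots,N\}$, $\alpha_t=\sum_{j\in\Gamma_{\mathcal{R}}(t)}M_j$ and $\alpha_{t,t'}=\sum_{j\in\Gamma_{\mathcal{R}}(t)\cap\Gamma_{\mathcal{R}}(t')}M_j$, and $\mathcal{Q}_\ell=\{i:P_i\in G^{[\ell]}\}$, $\mathcal{Q}_\ell^\complement=\{1,\dots,N\}\setminus\mathcal{Q}_\ell$. Then, for the shot-weighted averaging estimators, $\mathrm{Var}(\overline{E}_{\mathcal{R}'})\le\mathrm{Var}(\overline{E}_{\mathcal{R}})$ if and only if $$\tfrac12c_s^2\sigma^2_{P_s}\ \ge\ \sum_{i\in\mathcal{Q}_\ell}c_ic_s\sigma_{P_iP_s}\frac{\alpha_s-\alpha_{i,s}}{\alpha_i}\ -\sum_{i\in\mathcal{Q}_\ell^\complement,\,i\ne s}c_ic_s\sigma_{P_iP_s}\frac{\alpha_{i,s}}{\alpha_i},$$ and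 $\mathrm{Var}(\overline{E}_{\mathcal{R}'})<\mathrm{Var}(\overline{E}_{\mathcal{R}})$ if and only if this inequality is strict.
   Context: A Pauli Hamiltonian is $H=\sum_{i=1}^Nc_iP_i$ with real nonzero $c_i$ and distinct $n$-qubit Pauli strings; $\mathrm{supp}(H)=\{P_1,\dots,P_N\}$. $\sigma_P^2=1-\langle P\rangle^2$, and for commuting $P,Q$, $\sigma_{PQ}=\langle PQ\rangle-\langle P\rangle\langle Q\rangle$ (terms with $\alpha_{i,s}=0$, possibly involving non-commuting pairs, are taken to be $0$). A repacked grouping is a list of $m$ sets of mutually commuting operators of $\mathrm{supp}(H)$ covering $\mathrm{supp}(H)$, possibly overlapping, each containing the corresponding group of an underlying disjoint grouping; $(G'^{[j]})$ is a refinement of $(G^{[j]})$ if $G^{[j]}\subseteq G'^{[j]}$ for all $j$ (and it is again such a list). $\Gamma_{\mathcal{S}}(i)=\{j:P_i\in\text{group }j\text{ of }\mathcal{S}\}$. Measurement model: group $j$ is measured in $M_j$ independent shots with simultaneous $\pm1$ outcomes of all its operators; different groups are independent. The shot-weighted estimator is $\overline{E}_{\mathcal{S}}=\sum_ic_i\sum_{j\in\Gamma_{\mathcal{S}}(i)}\frac{M_j}{\sum_{k\in\Gamma_{\mathcal{S}}(i)}M_k}\overline{\langle P_i\rangle}_{(j)}$, whose variance is $\sum_i\frac{c_i^2\sigma_{P_i}^2}{\sum_{j\in\Gamma_{\mathcal{S}}(i)}M_j}+2\sum_{i<k}\frac{c_ic_k\sigma_{P_iP_k}\sum_{j\in\Gamma_{\mathcal{S}}(i)\cap\Gamma_{\mathcal{S}}(k)}M_j}{(\sum_{j\in\Gamma_{\mathcal{S}}(i)}M_j)(\sum_{j\in\Gamma_{\mathcal{S}}(k)}M_j)}$.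 *)

theory Defs
  imports "Jordan_Normal_Form.Matrix"
begin

datatype pauli = PI | PX | PY | PZ

fun pauli_entry :: "pauli \<Rightarrow> nat \<Rightarrow> nat \<Rightarrow> complex" where
  "pauli_entry PI a b = (if a = b then 1 else 0)"
| "pauli_entry PX a b = (if a \<noteq> b then 1 else 0)"
| "pauli_entry PY a b = (if a = b then 0 else if a = 0 then - \<i> else \<i>)"
| "pauli_entry PZ a b = (if a \<noteq> b then 0 else if a = 0 then 1 else -1)"

text \<open>The 2^n x 2^n matrix of a Pauli string (tensor product of its factors);
  the k-th factor acts on bit k of the basis index.\<close>
definition pstring_mat :: "pauli list \<Rightarrow> complex mat" where
  "pstring_mat ps = mat (2 ^ length ps) (2 ^ length ps)
     (\<lambda>(i, j). \<Prod>k<length ps. pauli_entry (ps ! k) ((i div 2 ^ k) mod 2) ((j div 2 ^ k) mod 2))"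

definition commutes :: "pauli list \<Rightarrow> pauli list \<Rightarrow> bool" where
  "commutes P Q \<longleftrightarrow> pstring_mat P * pstring_mat Q = pstring_mat Q * pstring_mat P"

definition is_state :: "nat \<Rightarrow> complex vec \<Rightarrow> bool" where
  "is_state n \<psi> \<longleftrightarrow> dim_vec \<psi> = 2 ^ n \<and> (\<Sum>k<2 ^ n. cmod (\<psi> $ k) ^ 2) = 1"

definition expect_mat :: "complex vec \<Rightarrow> complex mat \<Rightarrow> real" where
  "expect_mat \<psi> A = Re (\<Sum>k<dim_vec \<psi>. cnj (\<psi> $ k) * (A *\<^sub>v \<psi>) $ k)"

definition expect :: "complex vec \<Rightarrow> pauli list \<Rightarrow> real" where
  "expect \<psi> P = expect_mat \<psi> (pstring_mat P)"

definition sigma2 :: "complex vec \<Rightarrow> pauli list \<Rightarrow> real" where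
  "sigma2 \<psi> P = 1 - (expect \<psi> P) ^ 2"

text \<open>Covariance sigma_{PQ}; for non-commuting pairs the convention 0 is used
  (such terms only ever occur with weight alpha = 0).\<close>
definition sigma_cov :: "complex vec \<Rightarrow> pauli list \<Rightarrow> pauli list \<Rightarrow> real" where
  "sigma_cov \<psi> P Q = (if commutes P Q
      then expect_mat \<psi> (pstring_mat P * pstring_mat Q) - expect \<psi> P * expect \<psi> Q
      else 0)"

definition pauli_hamiltonian :: "nat \<Rightarrow> nat \<Rightarrow> (nat \<Rightarrow> real) \<Rightarrow> (nat \<Rightarrow> pauli list) \<Rightarrow> bool" where
  "pauli_hamiltonian n N c P \<longleftrightarrow>
     (\<forall>i\<in>{1..N}. c i \<noteq> 0 \<and> length (P i) = n) \<and> inj_on P {1..N}"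

definition supp :: "nat \<Rightarrow> (nat \<Rightarrow> pauli list) \<Rightarrow> pauli list set" where
  "supp N P = P ` {1..N}"

definition commuting_set :: "pauli list set \<Rightarrow> bool" where
  "commuting_set S \<longleftrightarrow> (\<forall>A\<in>S. \<forall>B\<in>S. commutes A B)"

definition is_grouping :: "nat \<Rightarrow> (nat \<Rightarrow> pauli list) \<Rightarrow> nat \<Rightarrow> (nat \<Rightarrow> pauli list set) \<Rightarrow> bool" where
  "is_grouping N P m D \<longleftrightarrow>
     (\<forall>j\<in>{1..m}. D j \<noteq> {} \<and> D j \<subseteq> supp N P \<and> commuting_set (D j)) \<and>
     (\<Union>j\<in>{1..m}. D j) = supp N P \<and>
     (\<forall>j\<in>{1..m}. \<forall>k\<in>{1..m}. j \<noteq> k \<longrightarrow> D j \<inter> D k = {})"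

definition is_repacked :: "nat \<Rightarrow> (nat \<Rightarrow> pauli list) \<Rightarrow> nat \<Rightarrow> (nat \<Rightarrow> pauli list set)
    \<Rightarrow> (nat \<Rightarrow> pauli list set) \<Rightarrow> bool" where
  "is_repacked N P m D G \<longleftrightarrow>
     is_grouping N P m D \<and>
     (\<forall>j\<in>{1..m}. D j \<subseteq> G j \<and> G j \<subseteq> supp N P \<and> commuting_set (G j)) \<and>
     (\<Union>j\<in>{1..m}. G j) = supp N P"

definition Gamma :: "nat \<Rightarrow> (nat \<Rightarrow> pauli list set) \<Rightarrow> (nat \<Rightarrow> pauli list) \<Rightarrow> nat \<Rightarrow> nat set" where
  "Gamma m G P i = {j \<in> {1..m}. P i \<in> G j}"

definition alpha :: "nat \<Rightarrow> (nat \<Rightarrow> pauli list set) \<Rightarrow> (nat \<Rightarrow> pauli list) \<Rightarrow> (nat \<Rightarrow> nat) \<Rightarrow> nat \<Rightarrow> real" where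
  "alpha m G P M i = (\<Sum>j\<in>Gamma m G P i. real (M j))"

definition alpha2 :: "nat \<Rightarrow> (nat \<Rightarrow> pauli list set) \<Rightarrow> (nat \<Rightarrow> pauli list) \<Rightarrow> (nat \<Rightarrow> nat) \<Rightarrow> nat \<Rightarrow> nat \<Rightarrow> real" where
  "alpha2 m G P M i k = (\<Sum>j\<in>Gamma m G P i \<inter> Gamma m G P k. real (M j))"

text \<open>Variance of the shot-weighted estimator E_S (formula from the measurement model).\<close>
definition est_var :: "nat \<Rightarrow> (nat \<Rightarrow> real) \<Rightarrow> (nat \<Rightarrow> pauli list) \<Rightarrow> complex vec
    \<Rightarrow> nat \<Rightarrow> (nat \<Rightarrow> pauli list set) \<Rightarrow> (nat \<Rightarrow> nat) \<Rightarrow> real" where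
  "est_var N c P \<psi> m G M =
     (\<Sum>i\<in>{1..N}. (c i) ^ 2 * sigma2 \<psi> (P i) / alpha m G P M i)
     + 2 * (\<Sum>i\<in>{1..N}. \<Sum>k\<in>{i<..N}.
          c i * c k * sigma_cov \<psi> (P i) (P k) * alpha2 m G P M i k
          / (alpha m G P M i * alpha m G P M k))"

end

theory Submission
  imports Defs
begin


lemma pair_sum:
  fixes d :: "nat \<Rightarrow> nat \<Rightarrow> real" and h :: "nat \<Rightarrow> real"
  assumes s: "s \<in> {1..N}"
    and z: "\<And>i k. i \<in> {1..N} \<Longrightarrow> k \<in> {1..N} \<Longrightarrow> i \<noteq> s \<Longrightarrow> k \<noteq> s \<Longrightarrow> d i k = 0"
    and h1: "\<And>i. i \<in> {1..N} \<Longrightarrow> i \<noteq> s \<Longrightarrow> d i s = h i"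
    and h2: "\<And>i. i \<in> {1..N} \<Longrightarrow> i \<noteq> s \<Longrightarrow> d s i = h i"
  shows "(\<Sum>i\<in>{1..N}. \<Sum>k\<in>{i<..N}. d i k) = (\<Sum>i\<in>{1..N}-{s}. h i)"
proof -
  have inner: "(\<Sum>k\<in>{i<..N}. d i k) = (if i < s then h i else 0)"
    if i: "i \<in> {1..N}-{s}" for i
  proof -
    have "(\<Sum>k\<in>{i<..N}. d i k) = (\<Sum>k\<in>{i<..N}. if k = s then h i else 0)"
      by (rule sum.cong) (use i z h1 in auto)
    also have "\<dots> = (if s \<in> {i<..N} then h i else 0)" by simp
    finally show ?thesis using s by auto
  qed
  have rows: "(\<Sum>k\<in>{s<..N}. d s k) = (\<Sum>k\<in>{s<..N}. h k)"
    by (rule sum.cong) (use h2 s in auto)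
  have "(\<Sum>i\<in>{1..N}. \<Sum>k\<in>{i<..N}. d i k)
      = (\<Sum>k\<in>{s<..N}. d s k) + (\<Sum>i\<in>{1..N}-{s}. \<Sum>k\<in>{i<..N}. d i k)"
    using s by (simp add: sum.remove)
  also have "\<dots> = (\<Sum>k\<in>{s<..N}. h k) + (\<Sum>i\<in>{1..N}-{s}. if i < s then h i else 0)"
    using rows inner by simp
  also have "(\<Sum>k\<in>{s<..N}. h k) = (\<Sum>i\<in>{1..N}-{s}. if i < s then 0 else h i)"
  proof -
    have "(\<Sum>i\<in>{1..N}-{s}. if i < s then 0 else h i) = (\<Sum>i\<in>{i\<in>{1..N}-{s}. \<not> i < s}. h i)"
      by (simp add: sum.If_cases, intro sum.cong) auto
    also have "{i\<in>{1..N}-{s}. \<not> i < s} = {s<..N}" using s by auto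
    finally show ?thesis by simp
  qed
  also have "(\<Sum>i\<in>{1..N}-{s}. if i < s then 0 else h i) + (\<Sum>i\<in>{1..N}-{s}. if i < s then h i else 0)
      = (\<Sum>i\<in>{1..N}-{s}. h i)"
    by (subst sum.distrib[symmetric], rule sum.cong) auto
  finally show ?thesis .
qed

lemma alg1:
  fixes x A d b C :: real assumes "x > 0" "A > 0" "d > 0"
  shows "C * ((b + d) / (x * (A + d)) - b / (x * A)) = d / (A * (A + d)) * (C * (A - b) / x)"
proof -
  define E where "E = A + d"
  have E: "E > 0" "d = E - A" using assms E_def by auto
  have "C * ((b + (E - A)) / (x * E) - b / (x * A)) = (E - A) / (A * E) * (C * (A - b) / x)"
    using E assms by (simp add: field_simps)
  then show ?thesis using E_def by simp
qed

lemma alg2: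
  fixes x A d b C :: real assumes "x > 0" "A > 0" "d > 0"
  shows "C * ((b + 0) / (x * (A + d)) - b / (x * A)) = d / (A * (A + d)) * (C * (0 - b) / x)"
proof -
  define E where "E = A + d"
  have E: "E > 0" "d = E - A" using assms E_def by auto
  have "C * (b / (x * E) - b / (x * A)) = (E - A) / (A * E) * (C * (0 - b) / x)"
    using E assms by (simp add: field_simps)
  then show ?thesis using E_def by simp
qed

theorem lemma4:
  fixes n N m l s :: nat
    and c :: "nat \<Rightarrow> real" and P :: "nat \<Rightarrow> pauli list"
    and \<psi> :: "complex vec"
    and D G G' :: "nat \<Rightarrow> pauli list set"
    and M :: "nat \<Rightarrow> nat"
  assumes H: "pauli_hamiltonian n N c P"
    and state: "is_state n \<psi>"
    and R: "is_repacked N P m D G"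
    and R': "is_repacked N P m D G'"
    and refine: "\<forall>j\<in>{1..m}. G j \<subseteq> G' j"
    and l: "l \<in> {1..m}"
    and same: "\<forall>j\<in>{1..m}. j \<noteq> l \<longrightarrow> G' j = G j"
    and s: "s \<in> {1..N}"
    and added: "G' l - G l = {P s}"
    and shots: "\<forall>j\<in>{1..m}. M j > 0"
  defines "Q \<equiv> {i \<in> {1..N}. P i \<in> G l}"
  defines "rhs \<equiv>
      (\<Sum>i\<in>Q. c i * c s * sigma_cov \<psi> (P i) (P s)
           * (alpha m G P M s - alpha2 m G P M i s) / alpha m G P M i)
    - (\<Sum>i\<in>({1..N} - Q) - {s}. c i * c s * sigma_cov \<psi> (P i) (P s)
           * alpha2 m G P M i s / alpha m G P M i)"
  shows "(est_var N c P \<psi> m G' M \<le> est_var N c P \<psi> m G M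
            \<longleftrightarrow> (1/2) * (c s) ^ 2 * sigma2 \<psi> (P s) \<ge> rhs)
       \<and> (est_var N c P \<psi> m G' M < est_var N c P \<psi> m G M
            \<longleftrightarrow> (1/2) * (c s) ^ 2 * sigma2 \<psi> (P s) > rhs)"
proof -
  let ?a = "alpha m G P M" and ?a' = "alpha m G' P M"
  let ?b = "alpha2 m G P M" and ?b' = "alpha2 m G' P M"
  let ?sc = "sigma_cov \<psi> (P i) (P s)"
  have inj: "inj_on P {1..N}" using H unfolding pauli_hamiltonian_def by auto
  have Gl: "G' l = insert (P s) (G l)" using added refine l by auto
  have PsG: "P s \<notin> G l" using added by auto
  have fin: "finite (Gamma m X P i)" for X i unfolding Gamma_def by auto
  have Gam_i: "Gamma m G' P i = Gamma m G P i" if i: "i \<in> {1..N}" "i \<noteq> s" for i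
  proof -
    have "P i \<noteq> P s" using inj i s by (meson inj_onD)
    then have "P i \<in> G' j \<longleftrightarrow> P i \<in> G j" if "j \<in> {1..m}" for j
      using same that Gl by (cases "j = l") auto
    then show ?thesis unfolding Gamma_def by auto
  qed
  have Gam_s: "Gamma m G' P s = insert l (Gamma m G P s)"
    using same Gl l unfolding Gamma_def by auto
  have lnot: "l \<notin> Gamma m G P s" using PsG unfolding Gamma_def by auto
  have a_i: "?a' i = ?a i" if "i \<in> {1..N}" "i \<noteq> s" for i
    unfolding alpha_def using Gam_i[OF that] by simp
  have a_s: "?a' s = ?a s + real (M l)"
    unfolding alpha_def Gam_s using lnot fin by simp
  have b_is: "?b' i s = ?b i s + (if i \<in> Q then real (M l) else 0)"
    if i: "i \<in> {1..N}" "i \<noteq> s" for i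
  proof (cases "i \<in> Q")
    case True
    then have "l \<in> Gamma m G P i" using l unfolding Q_def Gamma_def by auto
    then have "Gamma m G' P i \<inter> Gamma m G' P s = insert l (Gamma m G P i \<inter> Gamma m G P s)"
      using Gam_i[OF i] Gam_s by auto
    then show ?thesis unfolding alpha2_def using True lnot fin by simp
  next
    case False
    then have "l \<notin> Gamma m G P i" using i unfolding Q_def Gamma_def by auto
    then have "Gamma m G' P i \<inter> Gamma m G' P s = Gamma m G P i \<inter> Gamma m G P s"
      using Gam_i[OF i] Gam_s by auto
    then show ?thesis unfolding alpha2_def using False by simp
  qed
  have b_ik: "?b' i k = ?b i k" if "i \<in> {1..N}" "i \<noteq> s" "k \<in> {1..N}" "k \<noteq> s" for i k
    unfolding alpha2_def using Gam_i that by simp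
  have b_sym: "alpha2 m X P M i k = alpha2 m X P M k i" for X i k
    unfolding alpha2_def by (simp add: Int_commute)
  have sc_sym: "sigma_cov \<psi> A B = sigma_cov \<psi> B A" for A B
  proof (cases "commutes A B")
    case True
    then have "commutes B A" and e: "pstring_mat A * pstring_mat B = pstring_mat B * pstring_mat A"
      unfolding commutes_def by auto
    then show ?thesis using True unfolding sigma_cov_def by (simp add: e mult.commute)
  next
    case False
    then have "\<not> commutes B A" unfolding commutes_def by metis
    then show ?thesis using False unfolding sigma_cov_def by simp
  qed
  have a_posi: "?a i > 0" if si: "i \<in> {1..N}" for i
  proof -
    have "P i \<in> supp N P" using si unfolding supp_def by auto
    then have "P i \<in> (\<Union>j\<in>{1..m}. G j)" using R unfolding is_repacked_def by simp
    then obtain j where j: "j \<in> {1..m}" "P i \<in> G j" by blast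
    then have jG: "j \<in> Gamma m G P i" unfolding Gamma_def by auto
    have "real (M j) \<le> ?a i" unfolding alpha_def
      by (rule member_le_sum) (use jG fin in auto)
    moreover have "real (M j) > 0" using shots j by auto
    ultimately show ?thesis by linarith
  qed
  have a_pos: "?a s > 0" using a_posi s by blast
  define del where "del = real (M l)"
  have del_pos: "del > 0" using shots l del_def by auto
  define K where "K = del / (?a s * ?a' s)"
  have K_pos: "K > 0" unfolding K_def using a_s a_pos del_pos del_def by simp
  define g where "g X i k = c i * c k * sigma_cov \<psi> (P i) (P k) * alpha2 m X P M i k
          / (alpha m X P M i * alpha m X P M k)" for X i k
  define h where "h i = c i * c s * sigma_cov \<psi> (P i) (P s) *
     (?b' i s / (?a i * ?a' s) - ?b i s / (?a i * ?a s))" for i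
  have pd: "(\<Sum>i\<in>{1..N}. \<Sum>k\<in>{i<..N}. g G' i k - g G i k) = (\<Sum>i\<in>{1..N}-{s}. h i)"
  proof (rule pair_sum[OF s])
    fix i k assume "i \<in> {1..N}" "k \<in> {1..N}" "i \<noteq> s" "k \<noteq> s"
    then show "g G' i k - g G i k = 0" unfolding g_def using a_i b_ik by simp
  next
    fix i assume i: "i \<in> {1..N}" "i \<noteq> s"
    show "g G' i s - g G i s = h i" unfolding g_def h_def using a_i[OF i]
      by (simp add: algebra_simps diff_divide_distrib)
    show "g G' s i - g G s i = h i" unfolding g_def h_def using a_i[OF i]
      by (simp add: algebra_simps diff_divide_distrib sc_sym[of "P s"] b_sym[of _ s])
  qed
  have h_eq: "h i = K * (c i * c s * sigma_cov \<psi> (P i) (P s) *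
       ((if i \<in> Q then ?a s else 0) - ?b i s) / ?a i)"
    if i: "i \<in> {1..N}" "i \<noteq> s" for i
  proof -
    have ai: "?a i > 0" using a_posi i by blast
    have dl: "real (M l) > 0" using del_pos del_def by simp
    show ?thesis
      unfolding h_def K_def del_def b_is[OF i] a_s using a_pos ai dl
      by (cases "i \<in> Q") (simp_all only: if_True if_False alg1 alg2)
  qed
  have Qsub: "Q \<subseteq> {1..N}-{s}" using PsG unfolding Q_def by auto
  have sum_h: "(\<Sum>i\<in>{1..N}-{s}. h i) = K * rhs"
  proof -
    define f where "f i = c i * c s * sigma_cov \<psi> (P i) (P s) *
       ((if i \<in> Q then ?a s else 0) - ?b i s) / ?a i" for i
    have "(\<Sum>i\<in>{1..N}-{s}. h i) = (\<Sum>i\<in>{1..N}-{s}. K * f i)"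
      by (rule sum.cong) (auto simp: h_eq f_def)
    also have "\<dots> = K * (\<Sum>i\<in>{1..N}-{s}. f i)" by (simp add: sum_distrib_left)
    also have "(\<Sum>i\<in>{1..N}-{s}. f i) = (\<Sum>i\<in>({1..N}-{s})-Q. f i) + (\<Sum>i\<in>Q. f i)"
      by (rule sum.subset_diff[OF Qsub]) simp
    also have "(\<Sum>i\<in>Q. f i) = (\<Sum>i\<in>Q. c i * c s * sigma_cov \<psi> (P i) (P s)
           * (?a s - ?b i s) / ?a i)" by (rule sum.cong) (auto simp: f_def)
    also have "(\<Sum>i\<in>({1..N}-{s})-Q. f i) = - (\<Sum>i\<in>({1..N}-Q)-{s}. c i * c s * sigma_cov \<psi> (P i) (P s)
           * ?b i s / ?a i)"
      unfolding sum_negf[symmetric] by (rule sum.cong) (auto simp: f_def)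
    finally show ?thesis unfolding rhs_def by simp
  qed
  have first: "(\<Sum>i\<in>{1..N}. (c i)^2 * sigma2 \<psi> (P i) / ?a' i) - (\<Sum>i\<in>{1..N}. (c i)^2 * sigma2 \<psi> (P i) / ?a i)
      = - K * ((c s)^2 * sigma2 \<psi> (P s))"
  proof -
    have "(\<Sum>i\<in>{1..N}. (c i)^2 * sigma2 \<psi> (P i) / ?a' i) - (\<Sum>i\<in>{1..N}. (c i)^2 * sigma2 \<psi> (P i) / ?a i)
       = (\<Sum>i\<in>{1..N}. (c i)^2 * sigma2 \<psi> (P i) / ?a' i - (c i)^2 * sigma2 \<psi> (P i) / ?a i)"
      by (simp add: sum_subtractf)
    also have "\<dots> = (\<Sum>i\<in>{1..N}. if i = s then (c s)^2 * sigma2 \<psi> (P s) / ?a' s - (c s)^2 * sigma2 \<psi> (P s) / ?a s else 0)"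
      by (rule sum.cong) (auto simp: a_i)
    also have "\<dots> = (c s)^2 * sigma2 \<psi> (P s) / ?a' s - (c s)^2 * sigma2 \<psi> (P s) / ?a s"
      using s by simp
    also have "\<dots> = - K * ((c s)^2 * sigma2 \<psi> (P s))"
      unfolding K_def del_def using a_s a_pos del_pos del_def by (simp add: field_simps)
    finally show ?thesis .
  qed
  have D: "est_var N c P \<psi> m G' M - est_var N c P \<psi> m G M = K * (2 * rhs - (c s)^2 * sigma2 \<psi> (P s))"
  proof -
    have "est_var N c P \<psi> m G' M - est_var N c P \<psi> m G M =
      ((\<Sum>i\<in>{1..N}. (c i)^2 * sigma2 \<psi> (P i) / ?a' i) - (\<Sum>i\<in>{1..N}. (c i)^2 * sigma2 \<psi> (P i) / ?a i))
      + 2 * (\<Sum>i\<in>{1..N}. \<Sum>k\<in>{i<..N}. g G' i k - g G i k)"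
      unfolding est_var_def g_def by (simp add: sum_subtractf algebra_simps)
    also have "\<dots> = K * (2 * rhs - (c s)^2 * sigma2 \<psi> (P s))"
      unfolding first pd sum_h by (simp add: algebra_simps)
    finally show ?thesis .
  qed
  show ?thesis
  proof
    show "(est_var N c P \<psi> m G' M \<le> est_var N c P \<psi> m G M) = (rhs \<le> 1 / 2 * c s ^ 2 * sigma2 \<psi> (P s))"
    proof -
      have "(est_var N c P \<psi> m G' M \<le> est_var N c P \<psi> m G M) \<longleftrightarrow> K * (2 * rhs - (c s)^2 * sigma2 \<psi> (P s)) \<le> 0"
        using D by linarith
      also have "\<dots> \<longleftrightarrow> 2 * rhs - (c s)^2 * sigma2 \<psi> (P s) \<le> 0"
        using K_pos by (simp add: mult_le_0_iff)
      finally show ?thesis by linarith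
    qed
    show "(est_var N c P \<psi> m G' M < est_var N c P \<psi> m G M) = (rhs < 1 / 2 * c s ^ 2 * sigma2 \<psi> (P s))"
    proof -
      have "(est_var N c P \<psi> m G' M < est_var N c P \<psi> m G M) \<longleftrightarrow> K * (2 * rhs - (c s)^2 * sigma2 \<psi> (P s)) < 0"
        using D by linarith
      also have "\<dots> \<longleftrightarrow> 2 * rhs - (c s)^2 * sigma2 \<psi> (P s) < 0"
        using K_pos by (simp add: mult_less_0_iff)
      finally show ?thesis by linarith
    qed
  qed
qed

end
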